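(* Let $n\geqslant 3$ and let $P$, $P'$ be $n$-gonal suspensions in $\mathbb{R}^3$ with a fixed combinatorial equivalence between them, vertices labelled $x_0,x_1,\dots,x_n,x_{n+1}$ and $x'_0,\dots,x'_{n+1}$ as described in the context (corresponding vertices having corresponding labels). For $j=1,\dots,n$ write $j^+=j+1$ if $j<n$ and $n^+=1$, and let $\ell(a,b)$, $\ell'(a',b')$ denote lengths of edges of $P$, $P'$ (equivalently, the lengths of the corresponding sides in natural developments of $P$, $P'$). Define the polynomials $$q_j(t)=\det\begin{pmatrix}0&1&1&1&1\\1&0&\ell(x_0,x_j)^2&\ell(x_0,x_{j^+})^2&t^2\\1&\ell(x_0,x_j)^2&0&\ell(x_j,x_{j^+})^2&\ell(x_j,x_{n+1})^2\\1&\ell(x_0,x_{j^+})^2&\ell(x_j,x_{j^+})^2&0&\ell(x_{j^+},x_{n+1})^2\\1&t^2&\ell(x_j,x_{n+1})^2&\ell(x_{j^+},x_{n+1})^2&0\end{pmatrix},$$ $j=1,\dots,n$, and define $q'_j(t')$ by the same formula with $x_i,\ell,t$ replaced by $x'_i,\ell',t'$. Suppose that the system of $n$ algebraic equations $q'_j(t')=\delta\, q_j(t)$, $j=1,\dots,n$, in the three unknowns $\delta,t,t'$ has no real solution with $\delta>0$, $t>0$, $t'>0$. Then $P$ and $P'$ are not affine-equivalent.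
   Context: A polyhedron is a connected two-dimensional polyhedral surface in $\mathbb{R}^3$ composed of finitely many convex polygons (faces); it need not be convex and may self-intersect. An $n$-gonal suspension is a polyhedron combinatorially equivalent to a regular $n$-gonal bipyramid: it has vertices $x_0$ (south pole), $x_{n+1}$ (north pole) and equator vertices $x_1,\dots,x_n$ in cyclic order; its edges are $x_jx_{j^+}$, $x_0x_j$, $x_{n+1}x_j$ ($j=1,\dots,n$), and its faces are the triangles $x_0x_jx_{j^+}$ and $x_{n+1}x_jx_{j^+}$; $x_0$ and $x_{n+1}$ are not joined by an edge. Two combinatorially equivalent polyhedra are affine-equivalent if a nondegenerate affine map $\mathbb{R}^3\to\mathbb{R}^3$ carries the first onto the second and each vertex, edge and face to the corresponding one. *)

theory Defs
  imports "HOL-Analysis.Analysis"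
begin

definition jplus :: "nat \<Rightarrow> nat \<Rightarrow> nat" where
  "jplus n j = (if j < n then j + 1 else 1)"

text \<open>An n-gonal suspension, given by its labelled vertices x 0 (south pole),
  x 1, ..., x n (equator, in cyclic order), x (n+1) (north pole).
  The faces are the triangles x0 xj xj+ and x(n+1) xj xj+; being (convex,
  nondegenerate) polygonal faces, their vertices are not collinear; the vertices
  are pairwise distinct points.\<close>
definition suspension :: "nat \<Rightarrow> (nat \<Rightarrow> real^3) \<Rightarrow> bool" where
  "suspension n x \<longleftrightarrow> n \<ge> 3 \<and> inj_on x {0..n+1} \<and>
     (\<forall>j\<in>{1..n}. \<not> collinear {x 0, x j, x (jplus n j)} \<and>
                   \<not> collinear {x (n+1), x j, x (jplus n j)})"

text \<open>Affine equivalence of two combinatorially equivalent suspensions (with the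
  combinatorial equivalence given by the labelling): a nondegenerate affine map of
  R^3 sending each vertex to the corresponding one (it then carries edges and faces,
  i.e. segments and triangles, to the corresponding ones).\<close>
definition affine_equivalent :: "nat \<Rightarrow> (nat \<Rightarrow> real^3) \<Rightarrow> (nat \<Rightarrow> real^3) \<Rightarrow> bool" where
  "affine_equivalent n x x' \<longleftrightarrow>
     (\<exists>(M::real^3^3) b. det M \<noteq> 0 \<and> (\<forall>i\<in>{0..n+1}. M *v x i + b = x' i))"

definition det_entries :: "nat \<Rightarrow> (nat \<Rightarrow> nat \<Rightarrow> real) \<Rightarrow> real" where
  "det_entries k A = (\<Sum>p | p permutes {..<k}. of_int (sign p) * (\<Prod>i<k. A i (p i)))"

definition qpoly :: "nat \<Rightarrow> (nat \<Rightarrow> real^3) \<Rightarrow> nat \<Rightarrow> real \<Rightarrow> real" where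
  "qpoly n x j t =
     (let l = (\<lambda>a b. dist (x a) (x b)); jp = jplus n j; N = n + 1;
          M = [[0, 1, 1, 1, 1],
               [1, 0, (l 0 j)^2, (l 0 jp)^2, t^2],
               [1, (l 0 j)^2, 0, (l j jp)^2, (l j N)^2],
               [1, (l 0 jp)^2, (l j jp)^2, 0, (l jp N)^2],
               [1, t^2, (l j N)^2, (l jp N)^2, 0]]
      in det_entries 5 (\<lambda>r c. M ! r ! c))"

end

theory Submission imports Defs "HOL-Combinatorics.Permutations" begin

lemma step:
  assumes "finite S" "a \<notin> S"
  shows "(\<Sum>p | p permutes insert a S. of_int (sign p) * F p :: real) =
    (\<Sum>b\<in>insert a S. (if a = b then 1 else -1) * (\<Sum>q | q permutes S. of_int (sign q) * F (Transposition.transpose a b \<circ> q)))"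
proof -
  have "(\<Sum>p | p permutes insert a S. of_int (sign p) * F p :: real) =
    (\<Sum>b\<in>insert a S. (\<Sum>q | q permutes S. of_int (sign (Transposition.transpose a b \<circ> q)) * F (Transposition.transpose a b \<circ> q)))"
    by (rule sum_over_permutations_insert[OF assms])
  also have "\<dots> = (\<Sum>b\<in>insert a S. (if a = b then 1 else -1) * (\<Sum>q | q permutes S. of_int (sign q) * F (Transposition.transpose a b \<circ> q)))"
  proof (rule sum.cong[OF refl])
    fix b assume "b \<in> insert a S"
    show "(\<Sum>q | q permutes S. of_int (sign (Transposition.transpose a b \<circ> q)) * F (Transposition.transpose a b \<circ> q)) = (if a = b then 1 else -1) * (\<Sum>q | q permutes S. of_int (sign q) * F (Transposition.transpose a b \<circ> q))"
      unfolding sum_distrib_left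
    proof (rule sum.cong[OF refl])
      fix q assume "q \<in> {q. q permutes S}"
      then have "permutation q" using assms(1) permutation_permutes by blast
      then have "sign (Transposition.transpose a b \<circ> q) = sign (Transposition.transpose a b) * sign q"
        by (simp add: sign_compose permutation_swap_id)
      then show "of_int (sign (Transposition.transpose a b \<circ> q)) * F (Transposition.transpose a b \<circ> q) = (if a = b then 1 else -1) * (of_int (sign q) * F (Transposition.transpose a b \<circ> q))"
        by (simp add: sign_swap_id)
    qed
  qed
  finally show ?thesis .
qed

lemma base: "(\<Sum>p | p permutes {}. of_int (sign p) * F p :: real) = F id"
  by simp

lemma det5: "det_entries 5 (\<lambda>i k. [[0,1,1,1,1],[1,0,a,b,t],[1,a,0,c,d],[1,b,c,0,e],[1,t,d,e,0]] ! i ! k) = (2*(c*e*t+a*c*e+a*d*e+b*d*e+b*c*d+c*d*t+a*e*t+a*b*e+b*c*t+b*d*t+a*c*t+a*b*d)-2*(c*t*t+a*d*t+a*a*e+a*b*c+b*b*d+c*d*e+c*c*t+b*d*d+a*e*e+b*e*t)::real)"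
proof -
  have e: "{..<5::nat} = insert 0 (insert 1 (insert 2 (insert 3 (insert 4 {}))))" by auto
  have f: "finite {1::nat,2,3,4}" "finite {2::nat,3,4}" "finite {3::nat,4}" "finite {4::nat}" "finite ({}::nat set)"
    "(0::nat) \<notin> {1,2,3,4}" "(1::nat) \<notin> {2,3,4}" "(2::nat) \<notin> {3,4}" "(3::nat) \<notin> {4}" "(4::nat) \<notin> {}" by auto
  show ?thesis
  unfolding det_entries_def e
  apply (simp only: step[OF f(1) f(6)] step[OF f(2) f(7)] step[OF f(3) f(8)] step[OF f(4) f(9)] step[OF f(5) f(10)] base)
  apply (simp only: sum.insert[OF f(1) f(6)] sum.insert[OF f(2) f(7)] sum.insert[OF f(3) f(8)] sum.insert[OF f(4) f(9)] sum.insert[OF f(5) f(10)] sum.empty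
     prod.insert[OF f(1) f(6)] prod.insert[OF f(2) f(7)] prod.insert[OF f(3) f(8)] prod.insert[OF f(4) f(9)] prod.insert[OF f(5) f(10)] prod.empty comp_apply id_apply)
  apply (simp add: algebra_simps)
  done
qed

definition D3 :: "real^3 \<Rightarrow> real^3 \<Rightarrow> real^3 \<Rightarrow> real" where
  "D3 u v w = u$1*(v$2*w$3 - v$3*w$2) - u$2*(v$1*w$3 - v$3*w$1) + u$3*(v$1*w$2 - v$2*w$1)"

lemma poly9:
  fixes u1 u2 u3 v1 v2 v3 w1 w2 w3 a b c d e t :: real
  assumes "a = u1^2+u2^2+u3^2" "b = v1^2+v2^2+v3^2" "t = w1^2+w2^2+w3^2"
    "c = (u1-v1)^2+(u2-v2)^2+(u3-v3)^2" "d = (u1-w1)^2+(u2-w2)^2+(u3-w3)^2"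
    "e = (v1-w1)^2+(v2-w2)^2+(v3-w3)^2"
  shows "2*(c*e*t+a*c*e+a*d*e+b*d*e+b*c*d+c*d*t+a*e*t+a*b*e+b*c*t+b*d*t+a*c*t+a*b*d)-2*(c*t*t+a*d*t+a*a*e+a*b*c+b*b*d+c*d*e+c*c*t+b*d*d+a*e*e+b*e*t) = 8 * (u1*(v2*w3 - v3*w2) - u2*(v1*w3 - v3*w1) + u3*(v1*w2 - v2*w1))^2"
  unfolding assms by algebra

lemma dist2: "dist (p::real^3) q ^ 2 = (p$1-q$1)^2+(p$2-q$2)^2+(p$3-q$3)^2"
  unfolding dist_norm power2_norm_eq_inner by (simp add: inner_vec_def sum_3 power2_eq_square)

lemma cm:
  fixes p0 p1 p2 p3 :: "real^3"
  shows "det_entries 5 (\<lambda>i k. [[0,1,1,1,1],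
     [1, 0, (dist p0 p1)^2, (dist p0 p2)^2, (dist p0 p3)^2],
     [1, (dist p0 p1)^2, 0, (dist p1 p2)^2, (dist p1 p3)^2],
     [1, (dist p0 p2)^2, (dist p1 p2)^2, 0, (dist p2 p3)^2],
     [1, (dist p0 p3)^2, (dist p1 p3)^2, (dist p2 p3)^2, 0]] ! i ! k)
   = 8 * (D3 (p1 - p0) (p2 - p0) (p3 - p0))^2"
  unfolding det5 D3_def vector_minus_component
  apply (rule poly9) apply (simp_all only: dist2) apply algebra+ done

lemma D3_mult: "D3 (M *v u) (M *v v) (M *v w) = det M * D3 u v w"
  unfolding D3_def det_3 matrix_vector_mult_def vec_lambda_beta sum_3 by algebra

lemma qpoly_eq: "qpoly n x j (dist (x 0) (x (n+1))) =
   8 * (D3 (x j - x 0) (x (jplus n j) - x 0) (x (n+1) - x 0))^2"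
  unfolding qpoly_def Let_def by (rule cm)

theorem theorem7:
  fixes n :: nat and x x' :: "nat \<Rightarrow> real^3"
  assumes "n \<ge> 3"
    and "suspension n x" and "suspension n x'"
    and "\<not> (\<exists>\<delta> t t'. \<delta> > 0 \<and> t > 0 \<and> t' > 0 \<and>
                 (\<forall>j\<in>{1..n}. qpoly n x' j t' = \<delta> * qpoly n x j t))"
  shows "\<not> affine_equivalent n x x'"
proof
  assume "affine_equivalent n x x'"
  then obtain M :: "real^3^3" and b where dM: "det M \<noteq> 0"
    and Mx: "\<And>i. i \<in> {0..n+1} \<Longrightarrow> M *v x i + b = x' i"
    unfolding affine_equivalent_def by blast
  have injx: "inj_on x {0..n+1}" and injx': "inj_on x' {0..n+1}"
    using assms(2,3) unfolding suspension_def by auto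
  have "x 0 \<noteq> x (n+1)" using injx by (auto dest: inj_onD)
  then have tpos: "dist (x 0) (x (n+1)) > 0" by simp
  have "x' 0 \<noteq> x' (n+1)" using injx' by (auto dest: inj_onD)
  then have tpos': "dist (x' 0) (x' (n+1)) > 0" by simp
  have dpos: "(det M)^2 > 0" using dM by simp
  have diff: "x' i - x' 0 = M *v (x i - x 0)" if "i \<in> {0..n+1}" for i
  proof -
    have "x' i - x' 0 = (M *v x i + b) - (M *v x 0 + b)" using Mx[OF that] Mx[of 0] by simp
    then show ?thesis by (simp add: matrix_vector_mult_diff_distrib)
  qed
  have "\<forall>j\<in>{1..n}. qpoly n x' j (dist (x' 0) (x' (n+1))) = (det M)^2 * qpoly n x j (dist (x 0) (x (n+1)))"
  proof
    fix j assume j: "j \<in> {1..n}"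
    have jp: "jplus n j \<in> {0..n+1}" using j by (auto simp: jplus_def)
    have jj: "j \<in> {0..n+1}" using j by auto
    have nn: "n+1 \<in> {0..n+1}" by auto
    show "qpoly n x' j (dist (x' 0) (x' (n+1))) = (det M)^2 * qpoly n x j (dist (x 0) (x (n+1)))"
      unfolding qpoly_eq diff[OF jp] diff[OF jj] diff[OF nn] D3_mult
      by (simp add: power_mult_distrib)
  qed
  then show False using assms(4) dpos tpos tpos' by blast
qed

end
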